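(* Let $0<p<1/2$ and let $\mathcal E_p$ be the qubit channel mapping every input state $\varrho$ to the fixed state $\xi_p=p|0\rangle\langle 0|+(1-p)|1\rangle\langle 1|$. Then the boundariness of $\mathcal E_p$ in the convex set of qubit channels is $b(\mathcal E_p)=p(1-p)$, and this is strictly larger than the minimal eigenvalue $\lambda_{\min}=p/2$ of the Choi–Jamiolkowski operator $E_p=\xi_p\otimes\tfrac12 I$ of $\mathcal E_p$.
   Context: A qubit channel is a completely positive trace-preserving linear map on $2\times 2$ complex matrices; the set of qubit channels is convex. The Choi–Jamiolkowski operator of a channel $\mathcal E$ is $E=(\mathcal E\otimes\mathcal I)(|\psi_+\rangle\langle\psi_+|)$ with $|\psi_+\rangle=\frac1{\sqrt2}(|00\rangle+|11\rangle)$. For a convex set $Z$ and $x,y\in Z$, the weight function is $t_y(x)=\sup\{0\leq t<1 : \frac{y-tx}{1-t}\in Z\}$, and the boundariness of $y$ is $b(y)=\inf_{x\in Z}t_y(x)$. *)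

theory Defs
  imports Complex_Main "Jordan_Normal_Form.Char_Poly"
begin

text \<open>Qubit operators are 2x2 complex matrices (JNF type complex mat, carrier 2x2).
A linear map on qubit operators is a function on complex mat; only its values on the
2x2 carrier matter.\<close>

definition qop :: "complex mat set" where
  "qop = carrier_mat 2 2"

definition mtrace :: "complex mat \<Rightarrow> complex" where
  "mtrace A = (\<Sum>i<dim_row A. A $$ (i,i))"

definition psd :: "complex mat \<Rightarrow> bool" where
  "psd M \<longleftrightarrow> (\<exists>n. M \<in> carrier_mat n n \<and>
     (\<forall>v \<in> carrier_vec n.
        (\<Sum>i<n. \<Sum>j<n. cnj (v $ i) * M $$ (i,j) * v $ j) \<in> \<real> \<and>
        0 \<le> Re (\<Sum>i<n. \<Sum>j<n. cnj (v $ i) * M $$ (i,j) * v $ j)))"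

text \<open>Ampliation E \<otimes> id_n acting on (2n)x(2n) matrices, index of |a>|c> being n*a+c
(a<2 qubit index, c<n ancilla index).\<close>
definition ampl :: "nat \<Rightarrow> (complex mat \<Rightarrow> complex mat) \<Rightarrow> complex mat \<Rightarrow> complex mat" where
  "ampl n E X = mat (2*n) (2*n) (\<lambda>(i,j).
      E (mat 2 2 (\<lambda>(a',b'). X $$ (n*a' + i mod n, n*b' + j mod n))) $$ (i div n, j div n))"

definition qubit_channel :: "(complex mat \<Rightarrow> complex mat) \<Rightarrow> bool" where
  "qubit_channel E \<longleftrightarrow>
     (\<forall>A \<in> qop. E A \<in> qop) \<and>
     (\<forall>A \<in> qop. \<forall>B \<in> qop. \<forall>c::complex. E (c \<cdot>\<^sub>m A + B) = c \<cdot>\<^sub>m E A + E B) \<and>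
     (\<forall>n>0. \<forall>X \<in> carrier_mat (2*n) (2*n). psd X \<longrightarrow> psd (ampl n E X)) \<and>
     (\<forall>A \<in> qop. mtrace (E A) = mtrace A)"

definition qubit_channels :: "(complex mat \<Rightarrow> complex mat) set" where
  "qubit_channels = {E. qubit_channel E}"

text \<open>Weight function and boundariness in the convex set Z of maps on qubit operators
(pointwise affine combinations of maps; the values off the 2x2 carrier are irrelevant
to membership in the set of qubit channels).\<close>
definition weight :: "(complex mat \<Rightarrow> complex mat) set \<Rightarrow> (complex mat \<Rightarrow> complex mat)
     \<Rightarrow> (complex mat \<Rightarrow> complex mat) \<Rightarrow> real" where
  "weight Z y x = Sup {t. 0 \<le> t \<and> t < 1 \<and>
      (\<lambda>A. complex_of_real (1 / (1 - t)) \<cdot>\<^sub>m (y A - complex_of_real t \<cdot>\<^sub>m x A)) \<in> Z}"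

definition boundariness :: "(complex mat \<Rightarrow> complex mat) set \<Rightarrow> (complex mat \<Rightarrow> complex mat) \<Rightarrow> real" where
  "boundariness Z y = Inf (weight Z y ` Z)"

text \<open>|psi+><psi+| with psi+ = (|00>+|11>)/sqrt 2, basis index of |a>|c> is 2a+c.\<close>
definition psi_plus_proj :: "complex mat" where
  "psi_plus_proj = mat 4 4 (\<lambda>(i,j). if i div 2 = i mod 2 \<and> j div 2 = j mod 2 then 1/2 else 0)"

definition choi :: "(complex mat \<Rightarrow> complex mat) \<Rightarrow> complex mat" where
  "choi E = ampl 2 E psi_plus_proj"

definition kron :: "complex mat \<Rightarrow> complex mat \<Rightarrow> complex mat" where
  "kron A B = mat (dim_row A * dim_row B) (dim_col A * dim_col B)
     (\<lambda>(i,j). A $$ (i div dim_row B, j div dim_col B) * B $$ (i mod dim_row B, j mod dim_col B))"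

definition xi :: "real \<Rightarrow> complex mat" where
  "xi p = mat 2 2 (\<lambda>(i,j). if i = 0 \<and> j = 0 then complex_of_real p
                          else if i = 1 \<and> j = 1 then complex_of_real (1 - p) else 0)"

text \<open>The replacement channel: linear extension of rho \<mapsto> xi_p, i.e. A \<mapsto> tr(A) xi_p.\<close>
definition repl_channel :: "real \<Rightarrow> complex mat \<Rightarrow> complex mat" where
  "repl_channel p A = mtrace A \<cdot>\<^sub>m xi p"

end

theory Submission
  imports Defs
begin
lemma sum_2n: "(\<Sum>i<2*n. F i) = (\<Sum>i<n. F i) + (\<Sum>i<n. F (n+i::nat)::'a::comm_monoid_add)"
proof -
  have "(\<Sum>i<2*n. F i) = sum F {0..<n} + sum F {n..<n+n}"
    by (simp add: lessThan_atLeast0 mult_2 sum.atLeastLessThan_concat)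
  also have "sum F {n..<n+n} = sum F {0+n..<n+n}" by simp
  also have "\<dots> = (\<Sum>i<n. F (n+i))" by (subst sum.shift_bounds_nat_ivl) (simp add: lessThan_atLeast0 add.commute)
  finally show ?thesis by (simp add: lessThan_atLeast0)
qed

definition qf :: "complex mat \<Rightarrow> nat \<Rightarrow> (nat \<Rightarrow> complex) \<Rightarrow> complex" where
  "qf M m f = (\<Sum>i<m. \<Sum>j<m. cnj (f i) * M $$ (i,j) * f j)"

lemma psd_qf: assumes "psd M" "M \<in> carrier_mat m m"
  shows "qf M m f \<in> \<real> \<and> 0 \<le> Re (qf M m f)"
proof -
  from assms(1) obtain k where k: "M \<in> carrier_mat k k" and
    H: "\<forall>v \<in> carrier_vec k. (\<Sum>i<k. \<Sum>j<k. cnj (v $ i) * M $$ (i,j) * v $ j) \<in> \<real> \<and>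
        0 \<le> Re (\<Sum>i<k. \<Sum>j<k. cnj (v $ i) * M $$ (i,j) * v $ j)" unfolding psd_def by blast
  have km: "k = m" using k assms(2) by auto
  have "qf M m f = (\<Sum>i<m. \<Sum>j<m. cnj (vec m f $ i) * M $$ (i,j) * vec m f $ j)"
    unfolding qf_def by (auto intro!: sum.cong)
  then show ?thesis using H[rule_format, of "vec m f"] km by auto
qed

lemma qf_psd: assumes "M \<in> carrier_mat m m" "\<And>f. qf M m f \<in> \<real> \<and> 0 \<le> Re (qf M m f)"
  shows "psd M"
  unfolding psd_def using assms unfolding qf_def by blast

definition "Q00 M n g = (\<Sum>c<n. \<Sum>d<n. cnj (g c) * M$$(c,d) * g d)"
definition "Q01 M n g h = (\<Sum>c<n. \<Sum>d<n. cnj (g c) * M$$(c,n+d) * h d)"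
definition "Q10 M n h g = (\<Sum>c<n. \<Sum>d<n. cnj (h c) * M$$(n+c,d) * g d)"
definition "Q11 M n h = (\<Sum>c<n. \<Sum>d<n. cnj (h c) * M$$(n+c,n+d) * h d)"

lemma qf_split: "qf M (2*n) (\<lambda>i. if i<n then g i else h (i-n)) = Q00 M n g + Q01 M n g h + Q10 M n h g + Q11 M n h"
  unfolding qf_def Q00_def Q01_def Q10_def Q11_def
  by (simp only: sum_2n) (simp add: sum.distrib)

lemma disc: fixes a b c :: real
  assumes H: "\<And>r. 0 \<le> a + r*b + r^2*c" and a: "0 \<le> a" and c: "0 \<le> c"
  shows "b \<le> 2*sqrt a*sqrt c"
proof (cases "c = 0")
  case True
  have "b = 0"
  proof (rule ccontr)
    assume "b \<noteq> 0"
    then have "0 \<le> a + (-(a+1)/b)*b + (-(a+1)/b)^2*c" using H by blast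
    with True \<open>b \<noteq> 0\<close> show False by (simp add: field_simps)
  qed
  then show ?thesis using a c by simp
next
  case False
  then have cp: "c > 0" using c by simp
  have "0 \<le> a + (-b/(2*c))*b + (-b/(2*c))^2*c" using H by blast
  then have "0 \<le> a - b^2/(4*c)" using cp by (simp add: field_simps power2_eq_square)
  then have "b^2 \<le> 4*a*c" using cp by (simp add: field_simps)
  then have "sqrt (b^2) \<le> sqrt (4*a*c)" using real_sqrt_le_mono by blast
  moreover have "sqrt (4*a*c) = 2*sqrt a*sqrt c" using a c by (simp add: real_sqrt_mult)
  ultimately show ?thesis by simp
qed

lemma Q_scale:
  "Q00 M n (\<lambda>i. of_real r * g i) = of_real (r^2) * Q00 M n g"
  "Q11 M n (\<lambda>i. of_real r * h i) = of_real (r^2) * Q11 M n h"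
  "Q01 M n (\<lambda>i. of_real r * g i) (\<lambda>i. of_real s * h i) = of_real (r*s) * Q01 M n g h"
  "Q10 M n (\<lambda>i. of_real s * h i) (\<lambda>i. of_real r * g i) = of_real (r*s) * Q10 M n h g"
  by (simp_all add: Q00_def Q01_def Q10_def Q11_def sum_distrib_left mult_ac power2_eq_square)

lemma reals_eq: "z \<in> \<real> \<Longrightarrow> z = complex_of_real (Re z)"
  by (metis Reals_cases Re_complex_of_real)

lemma psd_blocks:
  assumes "psd M" "M \<in> carrier_mat (2*n) (2*n)"
  shows "Q00 M n g \<in> \<real> \<and> 0 \<le> Re (Q00 M n g)"
    and "Q11 M n h \<in> \<real> \<and> 0 \<le> Re (Q11 M n h)"
    and "Re (qf M (2*n) (\<lambda>i. if i<n then g i else h (i-n)))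
           \<le> (sqrt (Re (Q00 M n g)) + sqrt (Re (Q11 M n h)))^2"
proof -
  define P where "P r s = qf M (2*n) (\<lambda>i. if i<n then of_real r * g i else of_real s * h (i-n))" for r s
  have PQ: "P r s = of_real (r^2) * Q00 M n g + of_real (r*s) * (Q01 M n g h + Q10 M n h g)
            + of_real (s^2) * Q11 M n h" for r s
    unfolding P_def using qf_split[of M n "\<lambda>i. of_real r * g i" "\<lambda>i. of_real s * h i"]
    by (simp add: Q_scale algebra_simps)
  have Pp: "P r s \<in> \<real> \<and> 0 \<le> Re (P r s)" for r s
    unfolding P_def by (rule psd_qf[OF assms])
  have P10: "P 1 0 = Q00 M n g" and P01: "P 0 1 = Q11 M n h" by (simp_all add: PQ)
  show A: "Q00 M n g \<in> \<real> \<and> 0 \<le> Re (Q00 M n g)" using Pp[of 1 0] P10 by simp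
  show C: "Q11 M n h \<in> \<real> \<and> 0 \<le> Re (Q11 M n h)" using Pp[of 0 1] P01 by simp
  have P1r: "Re (P 1 r) = Re (Q00 M n g) + r * Re (Q01 M n g h + Q10 M n h g) + r^2 * Re (Q11 M n h)" for r
    by (simp add: PQ)
  have "Re (Q01 M n g h + Q10 M n h g) \<le> 2 * sqrt (Re (Q00 M n g)) * sqrt (Re (Q11 M n h))"
    apply (rule disc)
    using Pp P1r A C by (metis, simp, simp)
  moreover have "qf M (2*n) (\<lambda>i. if i<n then g i else h (i-n)) = P 1 1" by (simp only: P_def of_real_1 mult_1)
  moreover have "(sqrt (Re (Q00 M n g)) + sqrt (Re (Q11 M n h)))^2 =
     Re (Q00 M n g) + 2 * sqrt (Re (Q00 M n g)) * sqrt (Re (Q11 M n h)) + Re (Q11 M n h)"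
    using A C by (simp add: power2_eq_square algebra_simps)
  ultimately show "Re (qf M (2*n) (\<lambda>i. if i<n then g i else h (i-n)))
           \<le> (sqrt (Re (Q00 M n g)) + sqrt (Re (Q11 M n h)))^2"
    by (simp add: PQ)
qed

definition blk :: "nat \<Rightarrow> complex mat \<Rightarrow> nat \<Rightarrow> nat \<Rightarrow> complex mat" where
  "blk n X c d = mat 2 2 (\<lambda>(a',b'). X $$ (n*a' + c, n*b' + d))"

lemma blk_qop: "blk n X c d \<in> qop" by (simp add: blk_def qop_def)

lemma ampl_idx:
  assumes "c<n" "d<n" "a<2" "b<2"
  shows "ampl n E X $$ (n*a+c, n*b+d) = E (blk n X c d) $$ (a,b)"
proof -
  have i: "n*a+c < 2*n" using assms by (cases a) auto
  have j: "n*b+d < 2*n" using assms by (cases b) auto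
  show ?thesis using assms i j unfolding ampl_def blk_def by simp
qed

lemma ampl_idx4:
  assumes "c<n" "d<n"
  shows "ampl n E X $$ (c, d) = E (blk n X c d) $$ (0,0)"
    "ampl n E X $$ (c, n+d) = E (blk n X c d) $$ (0,1)"
    "ampl n E X $$ (n+c, d) = E (blk n X c d) $$ (1,0)"
    "ampl n E X $$ (n+c, n+d) = E (blk n X c d) $$ (1,1)"
  using ampl_idx[OF assms, of 0 0 E X] ampl_idx[OF assms, of 0 1 E X]
    ampl_idx[OF assms, of 1 0 E X] ampl_idx[OF assms, of 1 1 E X] by simp_all

lemma ampl_carrier: "ampl n E X \<in> carrier_mat (2*n) (2*n)" by (simp add: ampl_def)

lemma mtrace2: "A \<in> carrier_mat 2 2 \<Longrightarrow> mtrace A = A$$(0,0) + A$$(1,1)"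
  by (simp add: mtrace_def numeral_2_eq_2 lessThan_Suc)

lemma mtrace_blk: "mtrace (blk n X c d) = X$$(c,d) + X$$(n+c,n+d)"
  by (simp add: mtrace2 blk_def)

definition "QY X n g = (\<Sum>c<n. \<Sum>d<n. cnj (g c) * (X$$(c,d) + X$$(n+c,n+d)) * g d)"

lemma QY_split: "QY X n g = Q00 X n g + Q11 X n g"
  unfolding QY_def Q00_def Q11_def by (simp add: sum.distrib[symmetric] algebra_simps)

lemma QY_nonneg: assumes "psd X" "X \<in> carrier_mat (2*n) (2*n)"
  shows "QY X n g \<in> \<real> \<and> 0 \<le> Re (QY X n g)"
  using psd_blocks(1)[OF assms, of g] psd_blocks(2)[OF assms, of g] QY_split by auto

lemma channel_blocks:
  assumes ch: "qubit_channel x" and X: "psd X" "X \<in> carrier_mat (2*n) (2*n)" and n: "n > 0"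
  shows "Q00 (ampl n x X) n g + Q11 (ampl n x X) n g = QY X n g"
proof -
  have tr: "ampl n x X $$ (c,d) + ampl n x X $$ (n+c,n+d) = X$$(c,d) + X$$(n+c,n+d)"
    if "c<n" "d<n" for c d
  proof -
    have "x (blk n X c d) \<in> carrier_mat 2 2" using ch blk_qop unfolding qubit_channel_def qop_def by blast
    then have "mtrace (x (blk n X c d)) = x (blk n X c d) $$ (0,0) + x (blk n X c d) $$ (1,1)"
      by (rule mtrace2)
    moreover have "mtrace (x (blk n X c d)) = mtrace (blk n X c d)"
      using ch blk_qop unfolding qubit_channel_def by blast
    ultimately show ?thesis using ampl_idx4[OF that, of x X] mtrace_blk by simp
  qed
  have "Q00 (ampl n x X) n g + Q11 (ampl n x X) n g = (\<Sum>c<n. \<Sum>d<n. cnj (g c) *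
     (ampl n x X $$ (c,d) + ampl n x X $$ (n+c,n+d)) * g d)"
    unfolding Q00_def Q11_def by (simp add: sum.distrib[symmetric] algebra_simps)
  also have "\<dots> = QY X n g" unfolding QY_def by (intro sum.cong refl) (simp add: tr)
  finally show ?thesis .
qed

lemma f_split: "(\<lambda>i::nat. if i<n then f i else (\<lambda>i. f (n+i)) (i-n)) = f"
proof (rule ext)
  fix i show "(if i<n then f i else (\<lambda>i. f (n+i)) (i-n)) = f i"
    by (cases "i < n") auto
qed

lemma channel_bound:
  assumes ch: "qubit_channel x" and X: "psd X" "X \<in> carrier_mat (2*n) (2*n)" and n: "n > 0"
  shows "qf (ampl n x X) (2*n) f \<in> \<real>"
    and "Re (qf (ampl n x X) (2*n) f) \<le> (sqrt (Re (QY X n f)) + sqrt (Re (QY X n (\<lambda>i. f (n+i)))))^2"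
proof -
  let ?M = "ampl n x X"
  let ?h = "\<lambda>i. f (n+i)"
  have Mp: "psd ?M" using ch X n unfolding qubit_channel_def by blast
  have Mc: "?M \<in> carrier_mat (2*n) (2*n)" by (rule ampl_carrier)
  show "qf ?M (2*n) f \<in> \<real>" using psd_qf[OF Mp Mc] by blast
  have b: "Re (qf ?M (2*n) f) \<le> (sqrt (Re (Q00 ?M n f)) + sqrt (Re (Q11 ?M n ?h)))^2"
    using psd_blocks(3)[OF Mp Mc, of f ?h] f_split[of n f] by simp
  have a1: "Re (Q00 ?M n f) \<le> Re (QY X n f)"
    using channel_blocks[OF ch X n, of f] psd_blocks(2)[OF Mp Mc, of f]
    by (metis le_add_same_cancel1 plus_complex.sel(1))
  have a2: "Re (Q11 ?M n ?h) \<le> Re (QY X n ?h)"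
    using channel_blocks[OF ch X n, of ?h] psd_blocks(1)[OF Mp Mc, of ?h]
    by (metis le_add_same_cancel2 plus_complex.sel(1))
  have p1: "0 \<le> Re (Q00 ?M n f)" "0 \<le> Re (Q11 ?M n ?h)"
    using psd_blocks(1,2)[OF Mp Mc] by auto
  have "sqrt (Re (Q00 ?M n f)) + sqrt (Re (Q11 ?M n ?h)) \<le> sqrt (Re (QY X n f)) + sqrt (Re (QY X n ?h))"
    using a1 a2 by (simp add: add_mono)
  then have "(sqrt (Re (Q00 ?M n f)) + sqrt (Re (Q11 ?M n ?h)))^2 \<le> (sqrt (Re (QY X n f)) + sqrt (Re (QY X n ?h)))^2"
    by (rule power_mono) (use p1 in simp)
  with b show "Re (qf ?M (2*n) f) \<le> (sqrt (Re (QY X n f)) + sqrt (Re (QY X n ?h)))^2" by linarith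
qed

lemma xi_carrier: "xi p \<in> carrier_mat 2 2" by (simp add: xi_def)

lemma repl_blk: "a < 2 \<Longrightarrow> b < 2 \<Longrightarrow> repl_channel p B $$ (a,b) = mtrace B * xi p $$ (a,b)"
  unfolding repl_channel_def by (simp add: xi_def)

lemma xi_entries: "xi p $$ (0,0) = of_real p" "xi p $$ (0,1) = 0" "xi p $$ (1,0) = 0"
  "xi p $$ (1,1) = of_real (1-p)" by (simp_all add: xi_def)

lemma repl_qf:
  shows "qf (ampl n (repl_channel p) X) (2*n) f = of_real p * QY X n f + of_real (1-p) * QY X n (\<lambda>i. f (n+i))"
proof -
  let ?M = "ampl n (repl_channel p) X"
  let ?h = "\<lambda>i. f (n+i)"
  have e: "qf ?M (2*n) f = Q00 ?M n f + Q01 ?M n f ?h + Q10 ?M n ?h f + Q11 ?M n ?h"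
    using qf_split[of ?M n f ?h] f_split[of n f] by simp
  have "Q00 ?M n f = of_real p * QY X n f" unfolding Q00_def QY_def sum_distrib_left
    by (intro sum.cong refl) (simp add: ampl_idx4 repl_blk xi_def mtrace_blk)
  moreover have "Q11 ?M n ?h = of_real (1-p) * QY X n ?h" unfolding Q11_def QY_def sum_distrib_left
    by (intro sum.cong refl) (simp add: ampl_idx4 repl_blk xi_def mtrace_blk)
  moreover have "Q01 ?M n f ?h = 0" unfolding Q01_def
    by (intro sum.neutral ballI) (simp add: ampl_idx4 repl_blk xi_def)
  moreover have "Q10 ?M n ?h f = 0" unfolding Q10_def
    by (intro sum.neutral ballI) (simp add: ampl_idx4 repl_blk xi_def)
  ultimately show ?thesis using e by simp
qed

definition comb :: "real \<Rightarrow> (complex mat \<Rightarrow> complex mat) \<Rightarrow> (complex mat \<Rightarrow> complex mat) \<Rightarrow> complex mat \<Rightarrow> complex mat" where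
  "comb t y x = (\<lambda>A. complex_of_real (1 / (1 - t)) \<cdot>\<^sub>m (y A - complex_of_real t \<cdot>\<^sub>m x A))"

lemma comb_entry:
  assumes "y B \<in> carrier_mat 2 2" "x B \<in> carrier_mat 2 2" "a < 2" "b < 2"
  shows "comb t y x B $$ (a,b) = of_real (1/(1-t)) * (y B $$ (a,b) - of_real t * x B $$ (a,b))"
  using assms unfolding comb_def by simp

lemma ampl_comb:
  assumes y: "\<forall>A\<in>qop. y A \<in> qop" and x: "\<forall>A\<in>qop. x A \<in> qop" and ij: "i < 2*n" "j < 2*n"
  shows "ampl n (comb t y x) X $$ (i,j) = of_real (1/(1-t)) * (ampl n y X $$ (i,j) - of_real t * ampl n x X $$ (i,j))"
proof -
  let ?B = "mat 2 2 (\<lambda>(a',b'). X $$ (n*a' + i mod n, n*b' + j mod n))"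
  have B: "?B \<in> qop" by (simp add: qop_def)
  have d: "i div n < 2" "j div n < 2" using ij by (simp_all add: less_mult_imp_div_less)
  have "y ?B \<in> carrier_mat 2 2" "x ?B \<in> carrier_mat 2 2" using y x B unfolding qop_def by auto
  then show ?thesis using ij d unfolding ampl_def by (simp add: comb_entry)
qed

lemma qf_lin:
  assumes "\<And>i j. i < m \<Longrightarrow> j < m \<Longrightarrow> M $$ (i,j) = \<alpha> * (A $$ (i,j) - \<beta> * B $$ (i,j))"
  shows "qf M m f = \<alpha> * (qf A m f - \<beta> * qf B m f)"
proof -
  have "qf M m f = (\<Sum>i<m. \<Sum>j<m. \<alpha> * (cnj (f i) * A $$ (i,j) * f j) - \<alpha> * \<beta> * (cnj (f i) * B $$ (i,j) * f j))"
    unfolding qf_def by (intro sum.cong refl) (simp add: assms algebra_simps)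
  then show ?thesis unfolding qf_def by (simp add: sum_subtractf sum_distrib_left algebra_simps)
qed

lemma key_ineq:
  fixes p t A B q :: real
  assumes "0 < p" "p < 1" "0 \<le> t" "t \<le> p*(1-p)" "0 \<le> A" "0 \<le> B" "q \<le> (sqrt A + sqrt B)^2"
  shows "t * q \<le> p*A + (1-p)*B"
proof -
  define a b where "a = sqrt A" and "b = sqrt B"
  have A: "A = a^2" and B: "B = b^2" using assms a_def b_def by simp_all
  have "t * q \<le> t * (a+b)^2" using assms a_def b_def by (simp add: mult_left_mono)
  also have "\<dots> \<le> p*(1-p)*(a+b)^2" using assms by (simp add: mult_right_mono)
  also have "\<dots> = p*A + (1-p)*B - (p*a - (1-p)*b)^2" unfolding A B by (simp add: power2_eq_square algebra_simps)
  also have "\<dots> \<le> p*A + (1-p)*B" by simp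
  finally show ?thesis .
qed

lemma mtrace_smult_minus:
  assumes "A \<in> carrier_mat 2 2" "B \<in> carrier_mat 2 2"
  shows "mtrace (c \<cdot>\<^sub>m (A - d \<cdot>\<^sub>m B)) = c * (mtrace A - d * mtrace B)"
  using assms by (simp add: mtrace_def numeral_2_eq_2 lessThan_Suc carrier_matD algebra_simps)

lemma repl_channel_props:
  assumes "0 \<le> p" "p \<le> 1"
  shows "qubit_channel (repl_channel p)"
proof -
  let ?y = "repl_channel p"
  have C: "\<forall>A\<in>qop. ?y A \<in> qop" unfolding qop_def repl_channel_def by (simp add: xi_carrier)
  have L: "?y (c \<cdot>\<^sub>m A + B) = c \<cdot>\<^sub>m ?y A + ?y B" if "A \<in> qop" "B \<in> qop" for A B c
  proof -
    have "mtrace (c \<cdot>\<^sub>m A + B) = c * mtrace A + mtrace B"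
      using that unfolding qop_def by (simp add: mtrace_def numeral_2_eq_2 lessThan_Suc carrier_matD algebra_simps)
    then show ?thesis unfolding repl_channel_def
      by (intro eq_matI) (simp_all add: xi_def algebra_simps)
  qed
  have T: "mtrace (?y A) = mtrace A" for A
    unfolding repl_channel_def by (simp add: mtrace2 xi_def algebra_simps)
  have P: "psd (ampl n ?y X)" if "n > 0" "X \<in> carrier_mat (2*n) (2*n)" "psd X" for n X
  proof (rule qf_psd[OF ampl_carrier])
    fix f
    show "qf (ampl n ?y X) (2*n) f \<in> \<real> \<and> 0 \<le> Re (qf (ampl n ?y X) (2*n) f)"
      using repl_qf[of n p X f] QY_nonneg[OF that(3,2), of f] QY_nonneg[OF that(3,2), of "\<lambda>i. f (n+i)"] assms
      by (auto elim!: Reals_cases)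
  qed
  show ?thesis unfolding qubit_channel_def using C L T P by blast
qed

lemma chD:
  assumes "qubit_channel E"
  shows "A \<in> qop \<Longrightarrow> E A \<in> qop"
    and "A \<in> qop \<Longrightarrow> B \<in> qop \<Longrightarrow> E (c \<cdot>\<^sub>m A + B) = c \<cdot>\<^sub>m E A + E B"
    and "n > 0 \<Longrightarrow> X \<in> carrier_mat (2*n) (2*n) \<Longrightarrow> psd X \<Longrightarrow> psd (ampl n E X)"
    and "A \<in> qop \<Longrightarrow> mtrace (E A) = mtrace A"
  using assms unfolding qubit_channel_def by auto

lemma chI:
  assumes "\<And>A. A \<in> qop \<Longrightarrow> E A \<in> qop"
    and "\<And>A B c. A \<in> qop \<Longrightarrow> B \<in> qop \<Longrightarrow> E (c \<cdot>\<^sub>m A + B) = c \<cdot>\<^sub>m E A + E B"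
    and "\<And>n X. n > 0 \<Longrightarrow> X \<in> carrier_mat (2*n) (2*n) \<Longrightarrow> psd X \<Longrightarrow> psd (ampl n E X)"
    and "\<And>A. A \<in> qop \<Longrightarrow> mtrace (E A) = mtrace A"
  shows "qubit_channel E"
  using assms unfolding qubit_channel_def by auto

lemma comb_channel:
  assumes p: "0 < p" "p < 1" and x: "qubit_channel x" and t: "0 \<le> t" "t \<le> p*(1-p)"
  shows "qubit_channel (comb t (repl_channel p) x)"
proof -
  let ?y = "repl_channel p"
  let ?c = "comb t ?y x"
  have y: "qubit_channel ?y" using repl_channel_props p by simp
  have t1: "t < 1"
  proof -
    have "0 \<le> (p - 1/2)^2" by simp
    then have "p*(1-p) \<le> 1/4" by (simp add: power2_eq_square algebra_simps)
    then show ?thesis using t by linarith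
  qed
  have yC: "\<forall>A\<in>qop. ?y A \<in> qop" and xC: "\<forall>A\<in>qop. x A \<in> qop"
    using chD(1)[OF y] chD(1)[OF x] by blast+
  have C: "?c A \<in> qop" if "A \<in> qop" for A
  proof -
    have "?y A \<in> carrier_mat 2 2" "x A \<in> carrier_mat 2 2" using yC xC that unfolding qop_def by auto
    then show ?thesis unfolding comb_def qop_def by (intro smult_carrier_mat minus_carrier_mat) auto
  qed
  have L: "?c (k \<cdot>\<^sub>m A + B) = k \<cdot>\<^sub>m ?c A + ?c B" if AB: "A \<in> qop" "B \<in> qop" for A B k
  proof -
    have yl: "?y (k \<cdot>\<^sub>m A + B) = k \<cdot>\<^sub>m ?y A + ?y B" and xl: "x (k \<cdot>\<^sub>m A + B) = k \<cdot>\<^sub>m x A + x B"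
      using chD(2)[OF y AB] chD(2)[OF x AB] by blast+
    have cs: "?y A \<in> carrier_mat 2 2" "?y B \<in> carrier_mat 2 2" "x A \<in> carrier_mat 2 2" "x B \<in> carrier_mat 2 2"
      using yC xC AB unfolding qop_def by auto
    show ?thesis unfolding comb_def yl xl
      by (rule eq_matI) (use cs in \<open>simp_all add: algebra_simps\<close>)
  qed
  have T: "mtrace (?c A) = mtrace A" if "A \<in> qop" for A
  proof -
    have cs: "?y A \<in> carrier_mat 2 2" "x A \<in> carrier_mat 2 2" using yC xC that unfolding qop_def by auto
    have tr: "mtrace (?y A) = mtrace A" "mtrace (x A) = mtrace A" using chD(4)[OF y that] chD(4)[OF x that] by auto
    have "mtrace (?c A) = of_real (1/(1-t)) * (mtrace A - of_real t * mtrace A)"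
      unfolding comb_def using mtrace_smult_minus[OF cs] tr by simp
    also have "\<dots> = mtrace A"
    proof -
      have "complex_of_real (1 - t) \<noteq> 0" using t1 by simp
      then have "(1 - complex_of_real t) \<noteq> 0" by simp
      then show ?thesis by (simp add: field_simps)
    qed
    finally show ?thesis .
  qed
  have P: "psd (ampl n ?c X)" if n: "n > 0" and X: "X \<in> carrier_mat (2*n) (2*n)" "psd X" for n X
  proof (rule qf_psd[OF ampl_carrier])
    fix f :: "nat \<Rightarrow> complex"
    let ?h = "\<lambda>i. f (n+i)"
    have e: "qf (ampl n ?c X) (2*n) f = of_real (1/(1-t)) *
        (qf (ampl n ?y X) (2*n) f - of_real t * qf (ampl n x X) (2*n) f)"
      by (rule qf_lin) (rule ampl_comb[OF yC xC])
    obtain A where A: "QY X n f = of_real A" "0 \<le> A" using QY_nonneg[OF X(2,1), of f] by (auto elim!: Reals_cases)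
    obtain B where B: "QY X n ?h = of_real B" "0 \<le> B" using QY_nonneg[OF X(2,1), of ?h] by (auto elim!: Reals_cases)
    obtain q where q: "qf (ampl n x X) (2*n) f = of_real q" using channel_bound(1)[OF x X(2,1) n, of f] by (auto elim!: Reals_cases)
    have qb: "q \<le> (sqrt A + sqrt B)^2" using channel_bound(2)[OF x X(2,1) n, of f] q A B by simp
    have "t * q \<le> p*A + (1-p)*B" by (rule key_ineq) (use p t A B qb in auto)
    then have nn: "0 \<le> 1/(1-t) * (p*A + (1-p)*B - t*q)" using t1 by simp
    have "qf (ampl n ?c X) (2*n) f = of_real (1/(1-t) * (p*A + (1-p)*B - t*q))"
      unfolding e repl_qf q A B by simp
    then show "qf (ampl n ?c X) (2*n) f \<in> \<real> \<and> 0 \<le> Re (qf (ampl n ?c X) (2*n) f)"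
      using nn by simp
  qed
  show ?thesis by (rule chI) (use C L T P in auto)
qed

lemma ampl_id: assumes "X \<in> carrier_mat (2*n) (2*n)" shows "ampl n (\<lambda>A. A) X = X"
proof (rule eq_matI)
  show "dim_row (ampl n (\<lambda>A. A) X) = dim_row X" "dim_col (ampl n (\<lambda>A. A) X) = dim_col X"
    using assms by (simp_all add: ampl_def)
  fix i j assume "i < dim_row X" "j < dim_col X"
  then have ij: "i < 2*n" "j < 2*n" using assms by auto
  then have d: "i div n < 2" "j div n < 2" by (simp_all add: less_mult_imp_div_less)
  have "n * (i div n) + i mod n = i" "n * (j div n) + j mod n = j" by simp_all
  then show "ampl n (\<lambda>A. A) X $$ (i, j) = X $$ (i, j)" using ij d unfolding ampl_def by simp
qed

lemma id_channel: "qubit_channel (\<lambda>A. A)"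
  by (rule chI) (simp_all add: ampl_id)

lemma psi_carrier: "psi_plus_proj \<in> carrier_mat 4 4" by (simp add: psi_plus_proj_def)

lemma sum4: "(\<Sum>i<4. g (i::nat)) = g 0 + g 1 + g 2 + (g 3 :: 'a :: comm_monoid_add)"
  by (simp add: eval_nat_numeral add.assoc)

lemma sum2: "(\<Sum>i<2. g (i::nat)) = g 0 + (g 1 :: 'a :: comm_monoid_add)"
  by (simp add: eval_nat_numeral)

lemma qf_psi: "qf psi_plus_proj 4 f = 1/2 * (cnj (f 0) + cnj (f 3)) * (f 0 + f 3)"
  by (simp add: qf_def psi_plus_proj_def sum4 field_simps)

lemma psi_psd: "psd psi_plus_proj"
proof (rule qf_psd[OF psi_carrier])
  fix f :: "nat \<Rightarrow> complex"
  define r where "r = ((Re (f 0 + f 3))^2 + (Im (f 0 + f 3))^2) / 2"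
  have r0: "0 \<le> r" unfolding r_def by simp
  have "qf psi_plus_proj 4 f = of_real r"
    unfolding qf_psi r_def by (simp add: complex_eq_iff power2_eq_square field_simps)
  then show "qf psi_plus_proj 4 f \<in> \<real> \<and> 0 \<le> Re (qf psi_plus_proj 4 f)" using r0 by simp
qed

lemma not_channel:
  assumes p: "0 < p" "p < 1" and t: "p*(1-p) < t" "t < 1"
  shows "\<not> qubit_channel (comb t (repl_channel p) (\<lambda>A. A))"
proof
  let ?y = "repl_channel p"
  let ?c = "comb t ?y (\<lambda>A. A)"
  assume ch: "qubit_channel ?c"
  have psi2: "psi_plus_proj \<in> carrier_mat (2*2) (2*2)" using psi_carrier by simp
  have ps: "psd (ampl 2 ?c psi_plus_proj)" by (rule chD(3)[OF ch _ psi2 psi_psd]) simp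
  define f where "f = (\<lambda>i::nat. if i=0 then complex_of_real (1-p) else if i=3 then complex_of_real p else 0)"
  have ge: "0 \<le> Re (qf (ampl 2 ?c psi_plus_proj) (2*2) f)" using psd_qf[OF ps ampl_carrier] by blast
  have y: "qubit_channel ?y" using repl_channel_props p by simp
  have yC: "\<forall>A\<in>qop. ?y A \<in> qop" using chD(1)[OF y] by blast
  have iC: "\<forall>A\<in>qop. (\<lambda>A. A) A \<in> qop" by simp
  have e: "qf (ampl 2 ?c psi_plus_proj) (2*2) f = of_real (1/(1-t)) *
        (qf (ampl 2 ?y psi_plus_proj) (2*2) f - of_real t * qf (ampl 2 (\<lambda>A. A) psi_plus_proj) (2*2) f)"
    by (rule qf_lin) (rule ampl_comb[OF yC iC])
  have q1: "QY psi_plus_proj 2 f = of_real ((1-p)^2/2)"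
    by (simp add: QY_def sum2 psi_plus_proj_def f_def power2_eq_square)
  have q2: "QY psi_plus_proj 2 (\<lambda>i. f (2+i)) = of_real (p^2/2)"
    by (simp add: QY_def sum2 psi_plus_proj_def f_def power2_eq_square)
  have q3: "qf (ampl 2 (\<lambda>A. A) psi_plus_proj) (2*2) f = 1/2"
    using ampl_id[OF psi2] qf_psi[of f] by (simp add: f_def)
  define r where "r = 1/(1-t) * (p*(1-p)^2/2 + (1-p)*p^2/2 - t/2)"
  have "qf (ampl 2 ?c psi_plus_proj) (2*2) f = of_real r"
    unfolding e repl_qf q1 q2 q3 r_def by simp
  then have "Re (qf (ampl 2 ?c psi_plus_proj) (2*2) f) = r" by simp
  moreover have "r = 1/(1-t) * ((p*(1-p) - t)/2)"
  proof -
    have h: "p*(1-p)^2/2 + (1-p)*p^2/2 - t/2 = (p*(1-p) - t)/2"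
      by (simp add: power2_eq_square field_simps)
    show ?thesis unfolding r_def h ..
  qed
  moreover have "1/(1-t) * ((p*(1-p) - t)/2) < 0"
  proof (rule mult_pos_neg)
    show "0 < 1/(1-t)" using t by simp
    show "(p*(1-p) - t)/2 < 0" using t by simp
  qed
  ultimately show False using ge by simp
qed

lemma weight_comb: "weight Z y x = Sup {t. 0 \<le> t \<and> t < 1 \<and> comb t y x \<in> Z}"
  unfolding weight_def comb_def by (rule refl)

lemma pq_bounds: fixes p :: real assumes "0 < p" "p < 1" shows "0 \<le> p*(1-p)" "p*(1-p) < 1"
proof -
  show "0 \<le> p*(1-p)" using assms by (intro mult_nonneg_nonneg) auto
  have "0 \<le> (p - 1/2)^2" by simp
  then have "p*(1-p) \<le> 1/4" by (simp add: power2_eq_square algebra_simps)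
  then show "p*(1-p) < 1" by linarith
qed

lemma boundariness_repl:
  assumes p: "0 < p" "p < 1"
  shows "boundariness qubit_channels (repl_channel p) = p*(1-p)"
proof -
  let ?y = "repl_channel p"
  let ?Z = "qubit_channels"
  define S where "S x = {t. 0 \<le> t \<and> t < 1 \<and> comb t ?y x \<in> ?Z}" for x
  have w: "weight ?Z ?y x = Sup (S x)" for x unfolding S_def weight_comb ..
  have bdd: "bdd_above (S x)" for x unfolding S_def by (rule bdd_aboveI[of _ 1]) auto
  note pq = pq_bounds[OF p]
  have low: "p*(1-p) \<le> weight ?Z ?y x" if "x \<in> ?Z" for x
  proof -
    have "p*(1-p) \<in> S x" unfolding S_def qubit_channels_def
      using comb_channel[OF p, of x "p*(1-p)"] that pq unfolding qubit_channels_def by simp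
    then show ?thesis unfolding w by (rule cSup_upper[OF _ bdd])
  qed
  have zero: "0 \<in> S x" if "x \<in> ?Z" for x
    unfolding S_def qubit_channels_def
    using comb_channel[OF p, of x 0] that pq unfolding qubit_channels_def by simp
  have nn: "0 \<le> weight ?Z ?y x" if "x \<in> ?Z" for x
    unfolding w by (rule cSup_upper[OF zero[OF that] bdd])
  have idZ: "(\<lambda>A. A) \<in> ?Z" using id_channel unfolding qubit_channels_def by simp
  have up: "weight ?Z ?y (\<lambda>A. A) \<le> p*(1-p)"
    unfolding w
  proof (rule cSup_least)
    show "S (\<lambda>A. A) \<noteq> {}" using zero[OF idZ] by blast
    fix t assume "t \<in> S (\<lambda>A. A)"
    then have "0 \<le> t" "t < 1" "qubit_channel (comb t ?y (\<lambda>A. A))"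
      unfolding S_def qubit_channels_def by auto
    then show "t \<le> p*(1-p)" using not_channel[OF p, of t] by (cases "p*(1-p) < t") auto
  qed
  have ge: "p*(1-p) \<le> boundariness ?Z ?y"
    unfolding boundariness_def
    by (rule cInf_greatest) (use idZ low in auto)
  have bb: "bdd_below (weight ?Z ?y ` ?Z)"
    by (rule bdd_belowI[of _ 0]) (use nn in auto)
  have "boundariness ?Z ?y \<le> weight ?Z ?y (\<lambda>A. A)"
    unfolding boundariness_def by (rule cInf_lower[OF _ bb]) (use idZ in auto)
  with up ge show ?thesis by linarith
qed

lemma less4: "(i::nat) < 4 \<Longrightarrow> i = 0 \<or> i = 1 \<or> i = 2 \<or> i = 3" by auto

lemma choi_repl: "choi (repl_channel p) = kron (xi p) ((1/2::complex) \<cdot>\<^sub>m 1\<^sub>m 2)"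
proof (rule eq_matI)
  show "dim_row (choi (repl_channel p)) = dim_row (kron (xi p) ((1/2::complex) \<cdot>\<^sub>m 1\<^sub>m 2))"
    "dim_col (choi (repl_channel p)) = dim_col (kron (xi p) ((1/2::complex) \<cdot>\<^sub>m 1\<^sub>m 2))"
    by (simp_all add: choi_def ampl_def kron_def xi_def)
  fix i j assume "i < dim_row (kron (xi p) ((1/2::complex) \<cdot>\<^sub>m 1\<^sub>m 2))"
    "j < dim_col (kron (xi p) ((1/2::complex) \<cdot>\<^sub>m 1\<^sub>m 2))"
  then have i4: "i < 4" and j4: "j < 4" by (simp_all add: kron_def xi_def)
  then show "choi (repl_channel p) $$ (i, j) = kron (xi p) ((1/2::complex) \<cdot>\<^sub>m 1\<^sub>m 2) $$ (i, j)"
    using less4[OF i4] less4[OF j4]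
    by (elim disjE) (simp_all add: choi_def ampl_def repl_channel_def mtrace_def sum2 kron_def xi_def psi_plus_proj_def)
qed

definition dg :: "real \<Rightarrow> nat \<Rightarrow> complex" where
  "dg p i = (if i < 2 then complex_of_real (p/2) else complex_of_real ((1-p)/2))"

lemma kron_diag: "kron (xi p) ((1/2::complex) \<cdot>\<^sub>m 1\<^sub>m 2) = mat 4 4 (\<lambda>(i,j). if i = j then dg p i else 0)"
proof (rule eq_matI)
  show "dim_row (kron (xi p) ((1/2::complex) \<cdot>\<^sub>m 1\<^sub>m 2)) = dim_row (mat 4 4 (\<lambda>(i,j). if i = j then dg p i else 0))"
    "dim_col (kron (xi p) ((1/2::complex) \<cdot>\<^sub>m 1\<^sub>m 2)) = dim_col (mat 4 4 (\<lambda>(i,j). if i = j then dg p i else 0))"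
    by (simp_all add: kron_def xi_def)
  fix i j assume "i < dim_row (mat 4 4 (\<lambda>(i,j). if i = j then dg p i else (0::complex)))"
    "j < dim_col (mat 4 4 (\<lambda>(i,j). if i = j then dg p i else (0::complex)))"
  then have i4: "i < 4" and j4: "j < 4" by simp_all
  then show "kron (xi p) ((1/2::complex) \<cdot>\<^sub>m 1\<^sub>m 2) $$ (i, j) = mat 4 4 (\<lambda>(i,j). if i = j then dg p i else 0) $$ (i, j)"
    using less4[OF i4] less4[OF j4]
    by (elim disjE) (simp_all add: kron_def xi_def dg_def)
qed

lemma diag_mult:
  assumes "v \<in> carrier_vec 4"
  shows "mat 4 4 (\<lambda>(i,j). if i = j then d i else 0) *\<^sub>v v = vec 4 (\<lambda>i. d i * v $ i)"
proof (rule eq_vecI)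
  show "dim_vec (mat 4 4 (\<lambda>(i,j). if i = j then d i else 0) *\<^sub>v v) = dim_vec (vec 4 (\<lambda>i. d i * v $ i))" by simp
  fix i assume "i < dim_vec (vec 4 (\<lambda>i. d i * v $ i))"
  then have i4: "i < 4" by simp
  then show "(mat 4 4 (\<lambda>(i,j). if i = j then d i else 0) *\<^sub>v v) $ i = vec 4 (\<lambda>i. d i * v $ i) $ i"
    using less4[OF i4] assms
    by (elim disjE) (simp_all add: scalar_prod_def lessThan_atLeast0[symmetric] sum4 row_def)
qed

theorem proposition5:
  fixes p :: real
  assumes "0 < p" and "p < 1/2"
  shows "qubit_channel (repl_channel p)
       \<and> boundariness qubit_channels (repl_channel p) = p * (1 - p)
       \<and> choi (repl_channel p) = kron (xi p) ((1/2 :: complex) \<cdot>\<^sub>m 1\<^sub>m 2)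
       \<and> eigenvalue (choi (repl_channel p)) (complex_of_real (p/2))
       \<and> (\<forall>k. eigenvalue (choi (repl_channel p)) k \<longrightarrow> k \<in> \<real> \<and> p/2 \<le> Re k)
       \<and> p * (1 - p) > p / 2"
proof -
  have p1: "p < 1" using assms by simp
  have ch: "qubit_channel (repl_channel p)" by (rule repl_channel_props) (use assms in auto)
  have b: "boundariness qubit_channels (repl_channel p) = p * (1 - p)"
    by (rule boundariness_repl) (use assms in auto)
  define D where "D = mat 4 4 (\<lambda>(i,j). if i = j then dg p i else (0::complex))"
  have CD: "choi (repl_channel p) = D" unfolding D_def using choi_repl kron_diag by simp
  have ev: "eigenvalue D (complex_of_real (p/2))"
    unfolding eigenvalue_def eigenvector_def
  proof (intro exI conjI)
    show "unit_vec 4 0 \<in> carrier_vec (dim_row D)" unfolding D_def by simp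
    show "unit_vec 4 0 \<noteq> 0\<^sub>v (dim_row D)"
    proof
      assume "unit_vec 4 0 = 0\<^sub>v (dim_row D)"
      then have "unit_vec 4 0 $ 0 = (0\<^sub>v 4 :: complex vec) $ 0" unfolding D_def by simp
      then show False by simp
    qed
    show "D *\<^sub>v unit_vec 4 0 = complex_of_real (p/2) \<cdot>\<^sub>v unit_vec 4 0"
      unfolding D_def
    proof (subst diag_mult)
      show "unit_vec 4 0 \<in> carrier_vec 4" by simp
      show "vec 4 (\<lambda>i. dg p i * unit_vec 4 0 $ i) = complex_of_real (p / 2) \<cdot>\<^sub>v unit_vec 4 0"
        by (rule eq_vecI) (auto simp: dg_def)
    qed
  qed
  have all: "k \<in> \<real> \<and> p/2 \<le> Re k" if ek: "eigenvalue D k" for k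
  proof -
    obtain v where v: "v \<in> carrier_vec 4" "v \<noteq> 0\<^sub>v 4" "D *\<^sub>v v = k \<cdot>\<^sub>v v"
      using ek unfolding eigenvalue_def eigenvector_def D_def by auto
    have eq: "dg p i * v $ i = k * v $ i" if "i < 4" for i
    proof -
      have "vec 4 (\<lambda>i. dg p i * v $ i) = k \<cdot>\<^sub>v v" using v(3) diag_mult[OF v(1)] unfolding D_def by simp
      then have "vec 4 (\<lambda>i. dg p i * v $ i) $ i = (k \<cdot>\<^sub>v v) $ i" by simp
      then show ?thesis using that v(1) by simp
    qed
    obtain i where i: "i < 4" "v $ i \<noteq> 0"
    proof (rule ccontr)
      assume "\<not> thesis"
      then have "\<forall>i<4. v $ i = 0" using that by blast
      then have "v = 0\<^sub>v 4" using v(1) by (intro eq_vecI) auto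
      with v(2) show False by simp
    qed
    have "k = dg p i" using eq[OF i(1)] i(2) by simp
    moreover have "p/2 \<le> (1-p)/2" using assms by simp
    ultimately show ?thesis by (simp add: dg_def)
  qed
  have "0 < p * (1/2 - p)" using assms by (intro mult_pos_pos) auto
  then have last: "p * (1 - p) > p / 2" by (simp add: algebra_simps)
  have cr: "D = kron (xi p) ((1/2 :: complex) \<cdot>\<^sub>m 1\<^sub>m 2)" using CD choi_repl[of p] by simp
  show ?thesis unfolding CD using ch b cr ev all last by blast
qed

end
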